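(* Let $X$ be a compact metric space and $f\colon X\to X$ a positively $n$-expansive homeomorphism. Then the non-wandering set $\Omega(f)$ is finite if and only if $X$ is finite.
   Context: $f$ is positively $n$-expansive if there exists $c>0$ such that for every $x\in X$ the set $W^s_c(x)=\{y: d(f^k(y),f^k(x))\leq c \ \forall k\geq0\}$ has at most $n$ points. A point $x$ is non-wandering if for every open $U\ni x$ there is $k>0$ with $f^k(U)\cap U\neq\emptyset$; $\Omega(f)$ is the set of non-wandering points. *)

theory Defs
  imports "HOL-Analysis.Analysis"
begin

definition local_stable_set :: "('a::metric_space \<Rightarrow> 'a) \<Rightarrow> real \<Rightarrow> 'a \<Rightarrow> 'a set" where
  "local_stable_set f c x = {y. \<forall>k::nat. dist ((f ^^ k) y) ((f ^^ k) x) \<le> c}"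

definition pos_n_expansive :: "nat \<Rightarrow> ('a::metric_space \<Rightarrow> 'a) \<Rightarrow> bool" where
  "pos_n_expansive n f \<longleftrightarrow>
     (\<exists>c>0. \<forall>x. finite (local_stable_set f c x) \<and> card (local_stable_set f c x) \<le> n)"

definition non_wandering_set :: "('a::topological_space \<Rightarrow> 'a) \<Rightarrow> 'a set" where
  "non_wandering_set f = {x. \<forall>U. open U \<and> x \<in> U \<longrightarrow> (\<exists>k>0. (f ^^ k) ` U \<inter> U \<noteq> {})}"

end

theory Submission
  imports Defs
begin

lemma periodic_in_nw:
  assumes "0 < P" "(f^^P) x = x"
  shows "x \<in> non_wandering_set f"
  unfolding non_wandering_set_def
proof (intro CollectI allI impI)
  fix U :: "'a set" assume "open U \<and> x \<in> U"
  hence "x \<in> (f^^P) ` U \<inter> U" using assms(2) by (metis IntI image_eqI)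
  thus "\<exists>k>0. (f ^^ k) ` U \<inter> U \<noteq> {}" using assms(1) by blast
qed

lemma nw_invariant:
  assumes contf: "continuous_on UNIV f" and q: "q \<in> non_wandering_set f"
  shows "f q \<in> non_wandering_set f"
  unfolding non_wandering_set_def
proof (intro CollectI allI impI)
  fix U :: "'a set" assume U: "open U \<and> f q \<in> U"
  have "open (f -` U)" using continuous_imp_open_vimage[OF contf] U by auto
  moreover have "q \<in> f -` U" using U by auto
  ultimately obtain k where k: "k > 0" "(f^^k) ` (f -` U) \<inter> (f -` U) \<noteq> {}"
    using q unfolding non_wandering_set_def by blast
  then obtain y where y: "y \<in> f -` U" "(f^^k) y \<in> f -` U" by blast
  have "(f^^k) (f y) = f ((f^^k) y)" by (simp add: funpow_swap1)
  hence "(f^^k) (f y) \<in> (f^^k) ` U \<inter> U" using y by (metis IntI image_eqI vimageE)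
  thus "\<exists>k>0. (f ^^ k) ` U \<inter> U \<noteq> {}" using k(1) by blast
qed

lemma finite_orbit_periodic:
  assumes injh: "inj h" and fin: "finite A" and orb: "\<forall>m. (h^^m) y \<in> A"
  shows "\<exists>P>0. (h^^P) y = y"
proof -
  have "\<not> inj (\<lambda>m::nat. (h^^m) y)"
  proof
    assume "inj (\<lambda>m::nat. (h^^m) y)"
    hence "infinite (range (\<lambda>m::nat. (h^^m) y))" by (simp add: range_inj_infinite)
    moreover have "range (\<lambda>m::nat. (h^^m) y) \<subseteq> A" using orb by auto
    ultimately show False using fin finite_subset by blast
  qed
  then obtain i j where ij: "i \<noteq> j" "(h^^i) y = (h^^j) y" unfolding inj_def by blast
  have key: "\<And>i j. i < j \<Longrightarrow> (h^^i) y = (h^^j) y \<Longrightarrow> (h^^(j-i)) y = y"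
  proof -
    fix i j :: nat assume "i < j" "(h^^i) y = (h^^j) y"
    hence "(h^^i) ((h^^(j-i)) y) = (h^^i) y"
      by (metis add_diff_inverse_nat comp_apply funpow_add less_imp_le_nat not_le)
    thus "(h^^(j-i)) y = y" using inj_fn[OF injh] by (meson injD)
  qed
  show ?thesis
  proof (cases "i < j")
    case True thus ?thesis using key ij by (metis zero_less_diff)
  next
    case False hence "j < i" using ij by simp
    thus ?thesis using key ij by (metis zero_less_diff)
  qed
qed

theorem lemma2p4:
  fixes f :: "'a::metric_space \<Rightarrow> 'a" and n :: nat
  assumes "compact (UNIV :: 'a set)"
    and "homeomorphism UNIV UNIV f g"
    and "pos_n_expansive n f"
  shows "finite (non_wandering_set f) \<longleftrightarrow> finite (UNIV :: 'a set)"
proof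
  assume fin: "finite (non_wandering_set f)"
  define W where "W = non_wandering_set f"
  have contf: "continuous_on UNIV f" using assms(2) unfolding homeomorphism_def by blast
  have injf: "inj f" using assms(2) unfolding homeomorphism_def by (metis UNIV_I injI)
  obtain c where c: "c > 0" "\<And>x. finite (local_stable_set f c x)"
    using assms(3) unfolding pos_n_expansive_def by blast
  define D where "D = (\<lambda>p. dist (fst p) (snd p)) ` ((W \<times> W) \<inter> {p. fst p \<noteq> snd p})"
  define \<delta> where "\<delta> = Min (insert 1 D)"
  have finD: "finite D" unfolding D_def using fin W_def by auto
  have "\<forall>a\<in>insert 1 D. 0 < a" unfolding D_def by auto
  hence dpos: "\<delta> > 0" unfolding \<delta>_def using finD by (simp add: Min_gr_iff)
  have dsep: "\<delta> \<le> dist q q'" if "q \<in> W" "q' \<in> W" "q \<noteq> q'" for q q'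
  proof -
    have "dist q q' \<in> D" unfolding D_def using that by force
    thus ?thesis unfolding \<delta>_def using finD by simp
  qed
  have "uniformly_continuous_on UNIV f"
    using compact_uniformly_continuous[OF contf assms(1)] .
  then obtain \<eta> where eta: "\<eta> > 0" "\<And>a b. dist a b < \<eta> \<Longrightarrow> dist (f a) (f b) < \<delta>/2"
    unfolding uniformly_continuous_on_def using dpos by (metis UNIV_I half_gt_zero)
  define \<epsilon> where "\<epsilon> = min c (min \<eta> (\<delta>/2))"
  have epos: "\<epsilon> > 0" using c eta dpos unfolding \<epsilon>_def by simp
  define near where "near y \<longleftrightarrow> (\<exists>q\<in>W. dist y q < \<epsilon>)" for y
  have ev: "\<exists>K. \<forall>k\<ge>K. near ((f^^k) x)" for x
  proof (rule ccontr)
    assume "\<not> ?thesis"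
    hence inf: "infinite {k. \<not> near ((f^^k) x)}"
      unfolding infinite_nat_iff_unbounded_le by auto
    define e where "e = enumerate {k. \<not> near ((f^^k) x)}"
    have emono: "\<And>a b. a < b \<Longrightarrow> e a < e b" unfolding e_def using enumerate_mono inf by blast
    have ebad: "\<not> near ((f^^(e j)) x)" for j using enumerate_in_set[OF inf] e_def by auto
    have "seq_compact (UNIV :: 'a set)" using compact_imp_seq_compact[OF assms(1)] .
    then obtain z r where r: "strict_mono r" "((\<lambda>j. (f^^(e j)) x) \<circ> r) \<longlonglongrightarrow> z"
      unfolding seq_compact_def by blast
    have zfar: "\<not> near z"
    proof
      assume "near z"
      then obtain q where q: "q \<in> W" "dist z q < \<epsilon>" unfolding near_def by blast
      have "(\<lambda>j. dist (((\<lambda>j. (f^^(e j)) x) \<circ> r) j) q) \<longlonglongrightarrow> dist z q"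
        using r(2) by (intro tendsto_intros)
      moreover have "\<forall>j. \<epsilon> \<le> dist (((\<lambda>j. (f^^(e j)) x) \<circ> r) j) q"
        using ebad q(1) unfolding near_def comp_apply by (meson not_less)
      ultimately have "\<epsilon> \<le> dist z q" using LIMSEQ_le_const by blast
      thus False using q by simp
    qed
    have "z \<in> W" unfolding W_def non_wandering_set_def
    proof (intro CollectI allI impI)
      fix U :: "'a set" assume U: "open U \<and> z \<in> U"
      have "eventually (\<lambda>j. ((\<lambda>j. (f^^(e j)) x) \<circ> r) j \<in> U) sequentially"
        using topological_tendstoD[OF r(2)] U by blast
      then obtain N where N: "\<And>j. j \<ge> N \<Longrightarrow> (f^^(e (r j))) x \<in> U"
        unfolding eventually_sequentially by auto
      define a where "a = e (r N)"
      define b where "b = e (r (Suc N))"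
      have ab: "a < b" unfolding a_def b_def using emono r(1) by (simp add: strict_mono_def)
      have "(f^^(b-a)) ((f^^a) x) = (f^^b) x"
        using ab by (metis add_diff_inverse_nat comp_apply funpow_add less_imp_le_nat not_le add.commute)
      moreover have "(f^^a) x \<in> U" "(f^^b) x \<in> U" using N a_def b_def by auto
      ultimately have "(f^^b) x \<in> (f^^(b-a)) ` U \<inter> U" by (metis IntI image_eqI)
      thus "\<exists>k>0. (f ^^ k) ` U \<inter> U \<noteq> {}" using ab by (metis empty_iff zero_less_diff)
    qed
    moreover have "dist z z < \<epsilon>" using epos by simp
    ultimately have "near z" unfolding near_def by blast
    thus False using zfar by blast
  qed
  have "x \<in> W" for x
  proof -
    obtain K where K: "\<And>k. k \<ge> K \<Longrightarrow> near ((f^^k) x)" using ev by blast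
    obtain q where q: "q \<in> W" "dist ((f^^K) x) q < \<epsilon>" using K[of K] unfolding near_def by auto
    have claim: "dist ((f^^(m+K)) x) ((f^^m) q) < \<epsilon> \<and> (f^^m) q \<in> W" for m
    proof (induction m)
      case 0 thus ?case using q by simp
    next
      case (Suc m)
      have e1: "(f^^(Suc m + K)) x = f ((f^^(m+K)) x)" by simp
      have e2: "(f^^(Suc m)) q = f ((f^^m) q)" by simp
      have d1: "dist ((f^^(Suc m+K)) x) ((f^^Suc m) q) < \<delta>/2"
      proof -
        have "\<epsilon> \<le> \<eta>" unfolding \<epsilon>_def by simp
        hence "dist ((f^^(m+K)) x) ((f^^m) q) < \<eta>" using Suc.IH by linarith
        thus ?thesis unfolding e1 e2 by (rule eta(2))
      qed
      have inW: "(f^^Suc m) q \<in> W" unfolding e2 W_def using nw_invariant[OF contf] Suc W_def by blast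
      obtain q' where q': "q' \<in> W" "dist ((f^^(Suc m+K)) x) q' < \<epsilon>" using K[of "Suc m + K"] unfolding near_def by auto
      have "dist ((f^^Suc m) q) q' < \<delta>"
      proof -
        have "dist ((f^^Suc m) q) q' \<le> dist ((f^^(Suc m+K)) x) ((f^^Suc m) q) + dist ((f^^(Suc m+K)) x) q'"
          by (simp add: dist_triangle3)
        moreover have "\<epsilon> \<le> \<delta>/2" unfolding \<epsilon>_def by simp
        ultimately show ?thesis using d1 q'(2) by linarith
      qed
      hence "(f^^Suc m) q = q'" using dsep inW q'(1) by (metis not_le)
      thus ?case using q' inW by simp
    qed
    have cle: "\<epsilon> \<le> c" unfolding \<epsilon>_def by simp
    have y: "(f^^K) x \<in> local_stable_set f c q"
      unfolding local_stable_set_def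
    proof (intro CollectI allI)
      fix k
      have "(f^^k) ((f^^K) x) = (f^^(k+K)) x" by (simp add: funpow_add)
      thus "dist ((f ^^ k) ((f ^^ K) x)) ((f ^^ k) q) \<le> c" using claim[of k] cle by simp
    qed
    have finW: "finite W" using fin W_def by simp
    obtain N where N: "N > 0" "(f^^N) q = q"
      using finite_orbit_periodic[OF injf finW] claim by blast
    define S where "S = local_stable_set f c q"
    have hS: "(f^^N) y \<in> S" if "y \<in> S" for y
      unfolding S_def local_stable_set_def
    proof (intro CollectI allI)
      fix k
      have "(f^^k) ((f^^N) y) = (f^^(k+N)) y" by (simp add: funpow_add)
      moreover have "(f^^(k+N)) q = (f^^k) q" using N(2) by (simp add: funpow_add)
      moreover have "dist ((f^^(k+N)) y) ((f^^(k+N)) q) \<le> c"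
        using that unfolding S_def local_stable_set_def by blast
      ultimately show "dist ((f ^^ k) ((f ^^ N) y)) ((f ^^ k) q) \<le> c" by simp
    qed
    have orbS: "\<forall>m. ((f^^N)^^m) ((f^^K) x) \<in> S"
    proof
      fix m show "((f^^N)^^m) ((f^^K) x) \<in> S"
        by (induction m) (use y S_def hS in auto)
    qed
    obtain M where M: "M > 0" "((f^^N)^^M) ((f^^K) x) = (f^^K) x"
      using finite_orbit_periodic[OF inj_fn[OF injf] _ orbS] c(2) S_def by blast
    define P where "P = N * M"
    have Ppos: "P > 0" using N M P_def by simp
    have "(f^^K) ((f^^P) x) = (f^^K) x"
      using M(2) unfolding P_def funpow_mult
      by (metis add.commute comp_apply funpow_add)
    hence "(f^^P) x = x" using inj_fn[OF injf] by (meson injD)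
    thus "x \<in> W" unfolding W_def using periodic_in_nw Ppos by blast
  qed
  hence "UNIV = W" by auto
  thus "finite (UNIV :: 'a set)" using fin W_def by simp
next
  assume "finite (UNIV :: 'a set)"
  thus "finite (non_wandering_set f)" by (rule finite_subset[OF subset_UNIV])
qed

end
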